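(* Let $G_0$ and $P$ be groups with a common subgroup $A$ (i.e. $A$ is a subgroup of both), where $P$ is finitely generated abelian. As $B$ varies among subgroups with $A\subset B\subset P$, the amalgamated products $G_0*_A B$ (amalgamated along the given inclusions of $A$) lie in only finitely many isomorphism classes. *)

theory Defs
  imports "HOL-Algebra.Algebra"
begin

text \<open>Amalgamated free product of groups G and H along homomorphisms
  f : K -> G and g : K -> H, constructed by the standard presentation:
  words in the letters of G and H modulo the congruence generated by
  deleting identity letters, multiplying adjacent letters from the same
  factor, and identifying f k with g k for k in K.\<close>

definition amalg_words ::
  "('a, 'm) monoid_scheme \<Rightarrow> ('b, 'n) monoid_scheme \<Rightarrow> ('a + 'b) list set" where
  "amalg_words G H = lists (Inl ` carrier G \<union> Inr ` carrier H)"

inductive_set amalg_rel ::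
  "('a, 'm) monoid_scheme \<Rightarrow> ('b, 'n) monoid_scheme \<Rightarrow> ('c, 'o) monoid_scheme
   \<Rightarrow> ('c \<Rightarrow> 'a) \<Rightarrow> ('c \<Rightarrow> 'b) \<Rightarrow> (('a + 'b) list \<times> ('a + 'b) list) set"
  for G H K f g where
  rrefl: "w \<in> amalg_words G H \<Longrightarrow> (w, w) \<in> amalg_rel G H K f g"
| rsym: "(u, v) \<in> amalg_rel G H K f g \<Longrightarrow> (v, u) \<in> amalg_rel G H K f g"
| rtrans: "(u, v) \<in> amalg_rel G H K f g \<Longrightarrow> (v, w) \<in> amalg_rel G H K f g
           \<Longrightarrow> (u, w) \<in> amalg_rel G H K f g"
| unitL: "u \<in> amalg_words G H \<Longrightarrow> v \<in> amalg_words G H \<Longrightarrow>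
          (u @ Inl \<one>\<^bsub>G\<^esub> # v, u @ v) \<in> amalg_rel G H K f g"
| unitR: "u \<in> amalg_words G H \<Longrightarrow> v \<in> amalg_words G H \<Longrightarrow>
          (u @ Inr \<one>\<^bsub>H\<^esub> # v, u @ v) \<in> amalg_rel G H K f g"
| mergeL: "u \<in> amalg_words G H \<Longrightarrow> v \<in> amalg_words G H \<Longrightarrow>
           x \<in> carrier G \<Longrightarrow> y \<in> carrier G \<Longrightarrow>
           (u @ Inl x # Inl y # v, u @ Inl (x \<otimes>\<^bsub>G\<^esub> y) # v) \<in> amalg_rel G H K f g"
| mergeR: "u \<in> amalg_words G H \<Longrightarrow> v \<in> amalg_words G H \<Longrightarrow>
           x \<in> carrier H \<Longrightarrow> y \<in> carrier H \<Longrightarrow>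
           (u @ Inr x # Inr y # v, u @ Inr (x \<otimes>\<^bsub>H\<^esub> y) # v) \<in> amalg_rel G H K f g"
| ident: "u \<in> amalg_words G H \<Longrightarrow> v \<in> amalg_words G H \<Longrightarrow> k \<in> carrier K \<Longrightarrow>
          (u @ Inl (f k) # v, u @ Inr (g k) # v) \<in> amalg_rel G H K f g"

definition amalg_prod ::
  "('a, 'm) monoid_scheme \<Rightarrow> ('b, 'n) monoid_scheme \<Rightarrow> ('c, 'o) monoid_scheme
   \<Rightarrow> ('c \<Rightarrow> 'a) \<Rightarrow> ('c \<Rightarrow> 'b) \<Rightarrow> ('a + 'b) list set monoid" where
  "amalg_prod G H K f g =
     \<lparr>carrier = amalg_words G H // amalg_rel G H K f g,
      monoid.mult = (\<lambda>U V. Image (amalg_rel G H K f g) {(SOME x. x \<in> U) @ (SOME y. y \<in> V)}),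
      monoid.one = Image (amalg_rel G H K f g) {[]}\<rparr>"

end

theory Submission
  imports Defs
begin



definition S1 :: "('b,'n) monoid_scheme \<Rightarrow> 'b set \<Rightarrow> 'b \<Rightarrow> 'b set" where
  "S1 M Y0 a = {y. \<exists>x (t::int). x \<in> Y0 \<and> y = x \<otimes>\<^bsub>M\<^esub> a [^]\<^bsub>M\<^esub> t}"

fun Sp :: "('b,'n) monoid_scheme \<Rightarrow> 'b set \<Rightarrow> (nat \<Rightarrow> 'b) \<Rightarrow> nat \<Rightarrow> 'b set" where
  "Sp G D f 0 = D"
| "Sp G D f (Suc m) = S1 G (Sp G D f m) (f m)"

fun freeS :: "('b,'n) monoid_scheme \<Rightarrow> 'b set \<Rightarrow> (nat \<Rightarrow> 'b) \<Rightarrow> nat \<Rightarrow> bool" where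
  "freeS G D f 0 = True"
| "freeS G D f (Suc m) = (freeS G D f m \<and> (\<forall>t::int. f m [^]\<^bsub>G\<^esub> t \<in> Sp G D f m \<longrightarrow> t = 0))"

definition pure :: "('b,'n) monoid_scheme \<Rightarrow> 'b set \<Rightarrow> 'b set \<Rightarrow> bool" where
  "pure G D Y0 = (\<forall>x\<in>Y0. \<forall>j::nat. j > 0 \<longrightarrow> x [^]\<^bsub>G\<^esub> j \<in> D \<longrightarrow> x \<in> D)"

lemma Sp_cong: "(\<And>i. i < m \<Longrightarrow> f i = g i) \<Longrightarrow> Sp G D f m = Sp G D g m"
  by (induction m) auto

lemma freeS_cong: "(\<And>i. i < m \<Longrightarrow> f i = g i) \<Longrightarrow> freeS G D f m = freeS G D g m"
proof (induction m)
  case (Suc m)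
  then show ?case using Sp_cong[of m f g G D] by auto
qed auto

context comm_group
begin

lemma S1_I: "x \<in> Y0 \<Longrightarrow> x \<otimes> a [^] (t::int) \<in> S1 G Y0 a"
  unfolding S1_def by blast

lemma S1_E: "u \<in> S1 G Y0 a \<Longrightarrow> (\<And>x t. u = x \<otimes> a [^] (t::int) \<Longrightarrow> x \<in> Y0 \<Longrightarrow> P) \<Longrightarrow> P"
  unfolding S1_def by blast

lemma S1_subgroup:
  assumes "subgroup Y0 G" "a \<in> carrier G"
  shows "subgroup (S1 G Y0 a) G"
proof (rule subgroupI)
  interpret Y0: subgroup Y0 G by fact
  show "S1 G Y0 a \<subseteq> carrier G"
  proof
    fix u assume "u \<in> S1 G Y0 a"
    then obtain x and t::int where u: "u = x \<otimes> a [^] t" "x \<in> Y0" by (rule S1_E)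
    then show "u \<in> carrier G" using assms(2) by simp
  qed
  show "S1 G Y0 a \<noteq> {}" using S1_I[OF Y0.one_closed] by blast
  fix u assume "u \<in> S1 G Y0 a"
  then obtain x and t::int where u: "u = x \<otimes> a [^] t" "x \<in> Y0" by (rule S1_E)
  have "inv u = inv x \<otimes> a [^] (-t)"
    using u assms by (simp add: inv_mult int_pow_neg m_comm)
  then show "inv u \<in> S1 G Y0 a" using u S1_I[OF Y0.m_inv_closed] by simp
next
  interpret Y0: subgroup Y0 G by fact
  fix u v assume uv: "u \<in> S1 G Y0 a" "v \<in> S1 G Y0 a"
  from uv(1) obtain x and t :: int where u: "u = x \<otimes> a [^] t" "x \<in> Y0" by (rule S1_E)
  from uv(2) obtain y and s :: int where v: "v = y \<otimes> a [^] s" "y \<in> Y0" by (rule S1_E)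
  have "u \<otimes> v = (x \<otimes> y) \<otimes> a [^] (t + s)"
    using u v assms by (simp add: int_pow_mult m_ac)
  then show "u \<otimes> v \<in> S1 G Y0 a" using u v S1_I[OF Y0.m_closed] by simp
qed

lemma S1_sub: "Y0 \<subseteq> carrier G \<Longrightarrow> Y0 \<subseteq> S1 G Y0 a"
proof
  fix x assume "Y0 \<subseteq> carrier G" "x \<in> Y0"
  then have "x = x \<otimes> a [^] (0::int)" by auto
  then show "x \<in> S1 G Y0 a" using S1_I[OF \<open>x \<in> Y0\<close>, of a 0] by simp
qed

lemma S1_gen: "subgroup Y0 G \<Longrightarrow> a \<in> carrier G \<Longrightarrow> a \<in> S1 G Y0 a"
  using S1_I[OF subgroup.one_closed, of Y0 G a 1] by simp

lemma S1_min: "subgroup Y G \<Longrightarrow> Y0 \<subseteq> Y \<Longrightarrow> a \<in> Y \<Longrightarrow> S1 G Y0 a \<subseteq> Y"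
proof
  fix u assume a: "subgroup Y G" "Y0 \<subseteq> Y" "a \<in> Y" and uu: "u \<in> S1 G Y0 a"
  from uu obtain x and t::int where u: "u = x \<otimes> a [^] t" "x \<in> Y0" by (rule S1_E)
  show "u \<in> Y" unfolding u(1)
    by (rule subgroup.m_closed[OF a(1)]) (use u a in \<open>auto intro: subgroup_int_pow_closed\<close>)
qed

lemma S1_mono: "Y0 \<subseteq> Y' \<Longrightarrow> S1 G Y0 a \<subseteq> S1 G Y' a"
  unfolding S1_def by blast

lemma Sp_subgroup: "subgroup D G \<Longrightarrow> (\<And>i. i < m \<Longrightarrow> f i \<in> carrier G) \<Longrightarrow> subgroup (Sp G D f m) G"
proof (induction m)
  case (Suc m)
  have "subgroup (Sp G D f m) G" using Suc.IH Suc.prems by (metis less_SucI)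
  then show ?case using S1_subgroup Suc.prems(2)[of m] by simp
qed simp

lemma Sp_D: "subgroup D G \<Longrightarrow> (\<And>i. i < m \<Longrightarrow> f i \<in> carrier G) \<Longrightarrow> D \<subseteq> Sp G D f m"
proof (induction m)
  case (Suc m)
  have sg: "subgroup (Sp G D f m) G" using Sp_subgroup Suc.prems by (metis less_SucI)
  have "D \<subseteq> Sp G D f m" using Suc.IH Suc.prems by (metis less_SucI)
  also have "\<dots> \<subseteq> Sp G D f (Suc m)" using S1_sub[OF subgroup.subset[OF sg]] by simp
  finally show ?case .
qed simp

lemma Sp_gen: "subgroup D G \<Longrightarrow> (\<And>i. i < m \<Longrightarrow> f i \<in> carrier G) \<Longrightarrow> i < m \<Longrightarrow> f i \<in> Sp G D f m"
proof (induction m)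
  case (Suc m)
  have sg: "subgroup (Sp G D f m) G" using Sp_subgroup Suc.prems by (metis less_SucI)
  show ?case
  proof (cases "i = m")
    case True then show ?thesis using S1_gen[OF sg] Suc.prems(2)[of m] by simp
  next
    case False
    then have "i < m" using Suc.prems(3) by simp
    then have "f i \<in> Sp G D f m" using Suc.IH Suc.prems(1,2) by (metis less_SucI)
    then show ?thesis using S1_sub[OF subgroup.subset[OF sg], of "f m"] by auto
  qed
qed simp

lemma Sp_min: "subgroup Y G \<Longrightarrow> D \<subseteq> Y \<Longrightarrow> (\<And>i. i < m \<Longrightarrow> f i \<in> Y) \<Longrightarrow> Sp G D f m \<subseteq> Y"
proof (induction m)
  case (Suc m)
  have "Sp G D f m \<subseteq> Y" using Suc.IH Suc.prems by (metis less_SucI)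
  then show ?case using S1_min[of Y "Sp G D f m" "f m"] Suc.prems by simp
qed simp

lemma Sp_mono: "D \<subseteq> D' \<Longrightarrow> Sp G D f m \<subseteq> Sp G D' f m"
  by (induction m) (auto dest: S1_mono[THEN subsetD])

end


context comm_group
begin

lemma pow_combine:
  assumes "x \<in> carrier G" "y \<in> carrier G" "a \<in> carrier G"
  shows "(x \<otimes> a [^] (t::int)) \<otimes> (y \<otimes> a [^] (d::int)) [^] (k::int) = (x \<otimes> y [^] k) \<otimes> a [^] (t + d * k)"
  using assms by (simp add: int_pow_distrib int_pow_pow int_pow_mult m_ac)

lemma S1_one: "Y0 \<subseteq> carrier G \<Longrightarrow> S1 G Y0 \<one> = Y0"
  unfolding S1_def by force

lemma Sp_carrier: "subgroup D G \<Longrightarrow> (\<And>i. i < m \<Longrightarrow> f i \<in> carrier G) \<Longrightarrow> Sp G D f m \<subseteq> carrier G"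
  using Sp_subgroup subgroup.subset by blast

lemma subgroup_fg:
  assumes s: "\<And>i. i < n \<Longrightarrow> s i \<in> carrier G"
  shows "subgroup B G \<Longrightarrow> B \<subseteq> Sp G {\<one>} s n \<Longrightarrow> \<exists>b. (\<forall>i<n. b i \<in> B) \<and> B = Sp G {\<one>} b n"
  using s
proof (induction n arbitrary: B)
  case 0
  then have "B = {\<one>}" using subgroup.one_closed by fastforce
  then show ?case by simp
next
  case (Suc n)
  note sB = Suc.prems(1)
  interpret B: subgroup B G by (rule sB)
  define T where "T = Sp G {\<one>} s n"
  define a where "a = s n"
  have acar: "a \<in> carrier G" using Suc.prems(3) a_def by simp
  have sT: "subgroup T G" unfolding T_def using Sp_subgroup[OF triv_subgroup] Suc.prems(3) by simp
  interpret T: subgroup T G by (rule sT)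
  have BS: "B \<subseteq> S1 G T a" using Suc.prems(2) unfolding T_def a_def by simp
  define I where "I = {t::int. \<exists>x\<in>T. x \<otimes> a [^] t \<in> B}"
  show ?case
  proof (cases "I \<subseteq> {0}")
    case True
    have "B \<subseteq> T"
    proof
      fix y assume "y \<in> B"
      then have "y \<in> S1 G T a" using BS by blast
      then obtain x and t :: int where y: "y = x \<otimes> a [^] t" "x \<in> T" by (rule S1_E)
      then have "t \<in> I" unfolding I_def using \<open>y \<in> B\<close> by blast
      then have "t = 0" using True by blast
      then show "y \<in> T" using y by simp
    qed
    then obtain b where b: "\<forall>i<n. b i \<in> B" "B = Sp G {\<one>} b n"
      using Suc.IH[OF sB] Suc.prems(3) unfolding T_def by (metis less_SucI)
    define b' where "b' = b(n := \<one>)"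
    have "Sp G {\<one>} b' n = Sp G {\<one>} b n" by (rule Sp_cong) (simp add: b'_def)
    then have "Sp G {\<one>} b' (Suc n) = S1 G (Sp G {\<one>} b n) \<one>" by (simp add: b'_def)
    also have "\<dots> = B" using b(2) S1_one[OF B.subset] by simp
    finally show ?thesis using b(1) unfolding b'_def by (metis B.one_closed fun_upd_apply less_SucE)
  next
    case False
    then obtain t0 where t0: "t0 \<in> I" "t0 \<noteq> 0" by blast
    have neg: "-t \<in> I" if "t \<in> I" for t
    proof -
      obtain x where x: "x \<in> T" "x \<otimes> a [^] t \<in> B" using \<open>t \<in> I\<close> unfolding I_def by blast
      have "inv (x \<otimes> a [^] t) = inv x \<otimes> a [^] (-t)"
        using x acar by (simp add: inv_mult int_pow_neg m_comm)
      then show ?thesis unfolding I_def using x B.m_inv_closed T.m_inv_closed by (metis (mono_tags, lifting) mem_Collect_eq)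
    qed
    have exd: "\<exists>k::nat. k > 0 \<and> int k \<in> I"
    proof (cases "t0 > 0")
      case True then show ?thesis using t0 by (intro exI[of _ "nat t0"]) simp
    next
      case False then show ?thesis using t0 neg[OF t0(1)] by (intro exI[of _ "nat (-t0)"]) simp
    qed
    define d where "d = (LEAST k::nat. k > 0 \<and> int k \<in> I)"
    have d: "d > 0" "int d \<in> I" using LeastI_ex[OF exd] unfolding d_def by auto
    have dmin: "k \<ge> d" if "k > 0" "int k \<in> I" for k using that unfolding d_def by (simp add: Least_le)
    obtain x0 where x0: "x0 \<in> T" "x0 \<otimes> a [^] int d \<in> B" using d(2) unfolding I_def by blast
    define e where "e = x0 \<otimes> a [^] int d"
    have ecar: "e \<in> carrier G" unfolding e_def using x0 acar by simp
    have eB: "e \<in> B" using x0 unfolding e_def by simp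
    have red: "y \<otimes> e [^] (- q) \<in> B \<and> (x \<otimes> x0 [^] (-q)) \<in> T \<and> y \<otimes> e [^] (- q) = (x \<otimes> x0 [^] (-q)) \<otimes> a [^] (t - int d * q)"
      if "x \<in> T" "y = x \<otimes> a [^] t" "y \<in> B" for x y t q
    proof (intro conjI)
      show "y \<otimes> e [^] (- q) \<in> B" using that(3) subgroup_int_pow_closed[OF sB eB] by (rule B.m_closed)
      show "(x \<otimes> x0 [^] (-q)) \<in> T" using that x0 by (intro T.m_closed subgroup_int_pow_closed[OF sT]) auto
      show "y \<otimes> e [^] (- q) = (x \<otimes> x0 [^] (-q)) \<otimes> a [^] (t - int d * q)"
        unfolding that(2) e_def using pow_combine[of x x0 a t "int d" "-q"] that x0 acar by simp
    qed
    have dvd: "int d dvd t" if "t \<in> I" for t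
    proof -
      obtain x where x: "x \<in> T" "x \<otimes> a [^] t \<in> B" using \<open>t \<in> I\<close> unfolding I_def by blast
      define q where "q = t div int d"
      define r where "r = t mod int d"
      have "t - int d * q = r" unfolding q_def r_def by (metis minus_mult_div_eq_mod)
      then have "r \<in> I" using red[OF x(1) refl x(2), of q] unfolding I_def by auto
      have r: "0 \<le> r" "r < int d" unfolding r_def using d(1) by auto
      have "r = 0"
      proof (rule ccontr)
        assume "r \<noteq> 0"
        then have "nat r > 0" "int (nat r) \<in> I" using r \<open>r \<in> I\<close> by auto
        then have "nat r \<ge> d" using dmin by blast
        then show False using r by linarith
      qed
      then show ?thesis unfolding r_def by auto
    qed
    have sBT: "subgroup (B \<inter> T) G" using sB sT by (rule subgroups_Inter_pair)
    obtain b where b: "\<forall>i<n. b i \<in> B \<inter> T" "B \<inter> T = Sp G {\<one>} b n"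
      using Suc.IH[OF sBT] Suc.prems(3) unfolding T_def by (metis inf_le2 less_SucI)
    define b' where "b' = b(n := e)"
    have "Sp G {\<one>} b' n = Sp G {\<one>} b n" by (rule Sp_cong) (simp add: b'_def)
    then have eq: "Sp G {\<one>} b' (Suc n) = S1 G (B \<inter> T) e" by (simp add: b'_def b(2))
    have "e \<in> B" using x0 unfolding e_def by simp
    have "S1 G (B \<inter> T) e = B"
    proof
      show "S1 G (B \<inter> T) e \<subseteq> B" using S1_min[OF sB _ \<open>e \<in> B\<close>] by blast
      show "B \<subseteq> S1 G (B \<inter> T) e"
      proof
        fix y assume "y \<in> B"
        then have "y \<in> S1 G T a" using BS by blast
        then obtain x and t :: int where y: "y = x \<otimes> a [^] t" "x \<in> T" by (rule S1_E)
        then have "t \<in> I" unfolding I_def using \<open>y \<in> B\<close> by blast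
        then obtain q where q: "t = int d * q" using dvd by (meson dvdE)
        have r: "y \<otimes> e [^] (- q) \<in> B \<and> (x \<otimes> x0 [^] (-q)) \<in> T \<and> y \<otimes> e [^] (- q) = (x \<otimes> x0 [^] (-q)) \<otimes> a [^] (t - int d * q)"
          using red[OF y(2) y(1) \<open>y \<in> B\<close>, of q] .
        have "(x \<otimes> x0 [^] (-q)) \<in> carrier G" using r T.subset by blast
        moreover have "t - int d * q = 0" using q by simp
        ultimately have eqq: "y \<otimes> e [^] (- q) = x \<otimes> x0 [^] (-q)" using r by (metis r_one int_pow_0)
        have z: "y \<otimes> e [^] (- q) \<in> B \<inter> T"
        proof (rule IntI)
          show "y \<otimes> e [^] (- q) \<in> B" using r by blast
          show "y \<otimes> e [^] (- q) \<in> T" unfolding eqq using r by blast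
        qed
        have "y = (y \<otimes> e [^] (- q)) \<otimes> e [^] q"
          using \<open>y \<in> B\<close> ecar by (simp add: m_assoc int_pow_neg)
        then show "y \<in> S1 G (B \<inter> T) e" using S1_I[OF z] by metis
      qed
    qed
    then show ?thesis using eq b(1) \<open>e \<in> B\<close> unfolding b'_def by (metis IntD1 fun_upd_apply less_SucE)
  qed
qed

lemma generate_Sp:
  assumes "finite S" "S \<subseteq> carrier G"
  shows "\<exists>s n. (\<forall>i<n. s i \<in> S) \<and> generate G S = Sp G {\<one>} s n"
proof -
  obtain xs where xs: "set xs = S" using finite_list[OF assms(1)] by blast
  define s where "s i = xs ! i" for i
  define n where "n = length xs"
  have sS: "\<forall>i<n. s i \<in> S" unfolding s_def n_def using xs by auto
  then have sc: "\<And>i. i < n \<Longrightarrow> s i \<in> carrier G" using assms(2) by blast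
  have "generate G S \<subseteq> Sp G {\<one>} s n"
  proof (rule generate_subgroup_incl)
    show "subgroup (Sp G {\<one>} s n) G" using Sp_subgroup[OF triv_subgroup] sc by blast
    show "S \<subseteq> Sp G {\<one>} s n"
    proof
      fix x assume "x \<in> S"
      then obtain i where "i < n" "x = s i" using xs unfolding s_def n_def by (metis in_set_conv_nth)
      then show "x \<in> Sp G {\<one>} s n" using Sp_gen[OF triv_subgroup] sc by blast
    qed
  qed
  moreover have "Sp G {\<one>} s n \<subseteq> generate G S"
  proof (rule Sp_min)
    show "subgroup (generate G S) G" using generate_is_subgroup[OF assms(2)] .
    show "{\<one>} \<subseteq> generate G S" using generate.one by blast
    fix i assume "i < n" then have "s i \<in> S" using sS by blast
    then show "s i \<in> generate G S" by (rule generate.incl)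
  qed
  ultimately show ?thesis using sS by blast
qed

end



definition isol :: "('b,'n) monoid_scheme \<Rightarrow> 'b set \<Rightarrow> 'b set \<Rightarrow> 'b set" where
  "isol M Z0 Y = {x \<in> Y. \<exists>j::nat. j > 0 \<and> pow M x j \<in> Z0}"

context comm_group
begin

lemma isol_subgroup:
  assumes "subgroup Z0 G" "subgroup Y G"
  shows "subgroup (isol G Z0 Y) G"
proof (rule subgroupI)
  interpret Z: subgroup Z0 G by fact
  interpret Y: subgroup Y G by fact
  show "isol G Z0 Y \<subseteq> carrier G" unfolding isol_def using Y.subset by blast
  have "\<one> \<in> isol G Z0 Y" unfolding isol_def by (auto intro!: exI[of _ 1])
  then show "isol G Z0 Y \<noteq> {}" by blast
  fix x assume "x \<in> isol G Z0 Y"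
  then obtain j::nat where j: "x \<in> Y" "j > 0" "x [^] j \<in> Z0" unfolding isol_def by blast
  have "inv x [^] j = inv (x [^] j)" using j Y.subset by (simp add: nat_pow_inv)
  then show "inv x \<in> isol G Z0 Y" unfolding isol_def using j by auto
next
  interpret Z: subgroup Z0 G by fact
  interpret Y: subgroup Y G by fact
  fix x y assume "x \<in> isol G Z0 Y" "y \<in> isol G Z0 Y"
  then obtain j k::nat where j: "x \<in> Y" "j > 0" "x [^] j \<in> Z0" and k: "y \<in> Y" "k > 0" "y [^] k \<in> Z0"
    unfolding isol_def by blast
  have xc: "x \<in> carrier G" and yc: "y \<in> carrier G" using j k Y.subset by auto
  have "(x \<otimes> y) [^] (j * k) = (x [^] j) [^] k \<otimes> (y [^] k) [^] j"
    using xc yc by (simp add: pow_mult_distrib m_comm nat_pow_pow mult.commute)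
  also have "\<dots> \<in> Z0"
  proof (rule Z.m_closed)
    show "(x [^] j) [^] k \<in> Z0" using subgroup_int_pow_closed[OF assms(1) j(3), of "int k"] by (simp add: int_pow_int)
    show "(y [^] k) [^] j \<in> Z0" using subgroup_int_pow_closed[OF assms(1) k(3), of "int j"] by (simp add: int_pow_int)
  qed
  finally have "(x \<otimes> y) [^] (j * k) \<in> Z0" .
  moreover have "j * k > 0" using j k by simp
  ultimately show "x \<otimes> y \<in> isol G Z0 Y" unfolding isol_def using j k by blast
qed

lemma isol_sub: "isol G Z0 Y \<subseteq> Y" unfolding isol_def by blast

lemma isol_base: "Z0 \<subseteq> carrier G \<Longrightarrow> Z0 \<inter> Y \<subseteq> isol G Z0 Y" unfolding isol_def by (auto intro!: exI[of _ 1])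

lemma coset_finite:
  assumes sK: "subgroup K G" and c: "\<And>i. i < n \<Longrightarrow> c i \<in> carrier G"
    and pw: "\<And>i. i < n \<Longrightarrow> \<exists>j::nat. j > 0 \<and> c i [^] j \<in> K"
  shows "\<exists>Y. finite Y \<and> Y \<subseteq> Sp G {\<one>} c n \<and> (\<forall>x\<in>Sp G {\<one>} c n. \<exists>k\<in>K. \<exists>y\<in>Y. x = k \<otimes> y)"
  using c pw
proof (induction n)
  case 0
  have "\<forall>x\<in>Sp G {\<one>} c 0. \<exists>k\<in>K. \<exists>y\<in>{\<one>}. x = k \<otimes> y"
    using subgroup.one_closed[OF sK] by (auto intro!: bexI[of _ \<one>])
  then show ?case by (intro exI[of _ "{\<one>}"]) auto
next
  case (Suc n)
  interpret K: subgroup K G by (rule sK)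
  obtain Y where Y: "finite Y" "Y \<subseteq> Sp G {\<one>} c n" "\<forall>x\<in>Sp G {\<one>} c n. \<exists>k\<in>K. \<exists>y\<in>Y. x = k \<otimes> y"
    using Suc by (metis less_SucI)
  obtain m::nat where m: "m > 0" "c n [^] m \<in> K" using Suc.prems(2)[of n] by blast
  have cn: "c n \<in> carrier G" using Suc.prems(1) by simp
  have sT: "subgroup (Sp G {\<one>} c n) G" using Sp_subgroup[OF triv_subgroup] Suc.prems(1) by (metis less_SucI)
  define Y' where "Y' = (\<lambda>(y, r). y \<otimes> c n [^] (r::int)) ` (Y \<times> {0..<int m})"
  have "finite Y'" unfolding Y'_def using Y(1) by simp
  moreover have "Y' \<subseteq> Sp G {\<one>} c (Suc n)"
    unfolding Y'_def using Y(2) by (auto intro: S1_I)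
  moreover have "\<forall>x\<in>Sp G {\<one>} c (Suc n). \<exists>k\<in>K. \<exists>y\<in>Y'. x = k \<otimes> y"
  proof
    fix x assume "x \<in> Sp G {\<one>} c (Suc n)"
    then have "x \<in> S1 G (Sp G {\<one>} c n) (c n)" by simp
    then obtain z and t::int where x: "x = z \<otimes> c n [^] t" "z \<in> Sp G {\<one>} c n" by (rule S1_E)
    obtain k y where ky: "k \<in> K" "y \<in> Y" "z = k \<otimes> y" using Y(3) x(2) by blast
    define q where "q = t div int m"
    define r where "r = t mod int m"
    have t: "t = int m * q + r" unfolding q_def r_def by simp
    have r: "0 \<le> r" "r < int m" unfolding r_def using m by auto
    have yc: "y \<in> carrier G" using ky Y(2) subgroup.subset[OF sT] by blast
    have kc: "k \<in> carrier G" using ky K.subset by blast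
    have e1: "c n [^] t = (c n [^] m) [^] q \<otimes> c n [^] r"
      unfolding t using cn by (simp add: int_pow_mult int_pow_pow flip: int_pow_int)
    have "x = (k \<otimes> y) \<otimes> ((c n [^] m) [^] q \<otimes> c n [^] r)" unfolding x ky e1 ..
    also have "\<dots> = (k \<otimes> (c n [^] m) [^] q) \<otimes> (y \<otimes> c n [^] r)"
      using yc kc cn by (simp add: m_ac)
    finally have "x = (k \<otimes> (c n [^] m) [^] q) \<otimes> (y \<otimes> c n [^] r)" .
    moreover have "k \<otimes> (c n [^] m) [^] q \<in> K"
      using ky m by (intro K.m_closed subgroup_int_pow_closed[OF sK]) auto
    moreover have "y \<otimes> c n [^] r \<in> Y'" unfolding Y'_def using ky r by force
    ultimately show "\<exists>k\<in>K. \<exists>y\<in>Y'. x = k \<otimes> y" by blast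
  qed
  ultimately show ?case by blast
qed

lemma finite_between:
  assumes sK: "subgroup K G" and Cc: "C \<subseteq> carrier G" and Y: "finite Y" "Y \<subseteq> C" "\<forall>x\<in>C. \<exists>k\<in>K. \<exists>y\<in>Y. x = k \<otimes> y"
  shows "finite {D. subgroup D G \<and> K \<subseteq> D \<and> D \<subseteq> C}"
proof -
  define \<Phi> where "\<Phi> Y' = {k \<otimes> y | k y. k \<in> K \<and> y \<in> Y'}" for Y'
  have "{D. subgroup D G \<and> K \<subseteq> D \<and> D \<subseteq> C} \<subseteq> \<Phi> ` Pow Y"
  proof
    fix D assume D: "D \<in> {D. subgroup D G \<and> K \<subseteq> D \<and> D \<subseteq> C}"
    then have sD: "subgroup D G" and KD: "K \<subseteq> D" and DC: "D \<subseteq> C" by auto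
    interpret D: subgroup D G by (rule sD)
    have "D = \<Phi> (Y \<inter> D)"
    proof
      show "D \<subseteq> \<Phi> (Y \<inter> D)"
      proof
        fix x assume "x \<in> D"
        then obtain k y where ky: "k \<in> K" "y \<in> Y" "x = k \<otimes> y" using Y(3) DC by blast
        have kD: "k \<in> D" using ky KD by blast
        have yc: "y \<in> carrier G" using ky Y(2) Cc by blast
        have kc: "k \<in> carrier G" using kD D.subset by blast
        have "inv k \<otimes> x = (inv k \<otimes> k) \<otimes> y" unfolding ky(3) using yc kc by (simp only: m_assoc inv_closed)
        then have "y = inv k \<otimes> x" using yc kc by (simp add: l_inv)
        then have "y \<in> D" using kD \<open>x \<in> D\<close> by simp
        then show "x \<in> \<Phi> (Y \<inter> D)" unfolding \<Phi>_def using ky by blast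
      qed
      show "\<Phi> (Y \<inter> D) \<subseteq> D" unfolding \<Phi>_def using KD by auto
    qed
    then show "D \<in> \<Phi> ` Pow Y" by blast
  qed
  then show ?thesis using Y(1) by (meson finite_Pow_iff finite_imageI finite_subset)
qed

end


context comm_group
begin

lemma ab_pow: "a \<in> carrier G \<Longrightarrow> b \<in> carrier G \<Longrightarrow>
  (a [^] (i::int) \<otimes> b [^] (j::int)) [^] (k::int) = a [^] (i * k) \<otimes> b [^] (j * k)"
  by (simp add: int_pow_distrib int_pow_pow)

lemma ab_mult: "a \<in> carrier G \<Longrightarrow> b \<in> carrier G \<Longrightarrow>
  (a [^] (i::int) \<otimes> b [^] (j::int)) \<otimes> (a [^] (k::int) \<otimes> b [^] (l::int)) = a [^] (i + k) \<otimes> b [^] (j + l)"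
  by (simp add: int_pow_mult m_ac)

lemma pure_mono: "pure G D W \<Longrightarrow> W' \<subseteq> W \<Longrightarrow> pure G D W'"
  unfolding pure_def by blast

lemma pure_int: assumes "pure G D W" "x \<in> W" "x [^] (t::int) \<in> D" "t \<noteq> 0" "subgroup D G" "W \<subseteq> carrier G"
  shows "x \<in> D"
proof (cases "t > 0")
  case True
  then have "x [^] (nat t) \<in> D" using assms(3) by (metis int_pow_int int_nat_eq less_le_not_le)
  moreover have "nat t > 0" using True by simp
  ultimately show ?thesis using assms(1,2) unfolding pure_def by blast
next
  case False
  then have t: "t = - int (nat (-t))" "nat (-t) > 0" using assms(4) by auto
  have xc: "x \<in> carrier G" using assms by blast
  have "inv (x [^] (nat (-t))) \<in> D" using assms(3) xc by (metis int_pow_neg_int t(1))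
  then have "x [^] (nat (-t)) \<in> D" using subgroup.m_inv_closed[OF assms(5)] xc by (metis inv_inv nat_pow_closed)
  then show ?thesis using assms(1,2) t(2) unfolding pure_def by blast
qed

lemma two_gen:
  assumes sH: "subgroup H G" and a: "a \<in> carrier G" and b: "b \<in> carrier G" and z: "z \<in> carrier G"
    and pu: "pure G H (S1 G (S1 G H a) b)"
    and rk: "\<forall>x\<in>S1 G (S1 G H a) b. \<exists>j::nat. j > 0 \<and> x [^] j \<in> S1 G H z"
  shows "\<exists>w\<in>carrier G. S1 G (S1 G H a) b = S1 G H w"
proof -
  interpret H: subgroup H G by (rule sH)
  define W where "W = S1 G (S1 G H a) b"
  have sW: "subgroup W G" unfolding W_def using S1_subgroup[OF S1_subgroup[OF sH a] b] .
  have HW: "H \<subseteq> W" unfolding W_def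
    using S1_sub[OF H.subset, of a] S1_sub[OF subgroup.subset[OF S1_subgroup[OF sH a]], of b] by blast
  have aW: "a \<in> W" unfolding W_def
    using S1_gen[OF sH a] S1_sub[OF subgroup.subset[OF S1_subgroup[OF sH a]], of b] by blast
  have bW: "b \<in> W" unfolding W_def using S1_gen[OF S1_subgroup[OF sH a] b] .
  have Wc: "W \<subseteq> carrier G" using sW subgroup.subset by blast
  have puW: "pure G H W" using pu unfolding W_def .
  obtain p::nat where p: "p > 0" "a [^] p \<in> S1 G H z" using rk aW unfolding W_def by blast
  obtain q::nat where q: "q > 0" "b [^] q \<in> S1 G H z" using rk bW unfolding W_def by blast
  obtain h1 and s::int where h1: "a [^] p = h1 \<otimes> z [^] s" "h1 \<in> H" using p(2) by (rule S1_E)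
  obtain h2 and t::int where h2: "b [^] q = h2 \<otimes> z [^] t" "h2 \<in> H" using q(2) by (rule S1_E)
  have h1c: "h1 \<in> carrier G" and h2c: "h2 \<in> carrier G" using h1 h2 H.subset by auto
  define u where "u = int p * t"
  define v where "v = - (int q * s)"
  have "a [^] u = (h1 \<otimes> z [^] s) [^] t" unfolding u_def using a by (simp add: int_pow_pow flip: h1(1) int_pow_int)
  also have "\<dots> = h1 [^] t \<otimes> z [^] (s * t)" using h1c z by (simp add: int_pow_distrib int_pow_pow)
  finally have au: "a [^] u = h1 [^] t \<otimes> z [^] (s * t)" .
  have "b [^] v = inv ((h2 \<otimes> z [^] t) [^] s)" unfolding v_def using b
    by (simp add: int_pow_pow int_pow_neg flip: h2(1) int_pow_int)
  also have "\<dots> = inv (h2 [^] s) \<otimes> inv (z [^] (s * t))" using h2c z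
    by (simp add: int_pow_distrib int_pow_pow inv_mult mult.commute)
  finally have bv: "b [^] v = inv (h2 [^] s) \<otimes> inv (z [^] (s * t))" .
  have "a [^] u \<otimes> b [^] v = h1 [^] t \<otimes> inv (h2 [^] s) \<otimes> (z [^] (s * t) \<otimes> inv (z [^] (s * t)))"
    unfolding au bv using h1c h2c z by (simp add: m_ac)
  also have "\<dots> = h1 [^] t \<otimes> inv (h2 [^] s)" using h1c h2c z by simp
  finally have uvH: "a [^] u \<otimes> b [^] v \<in> H"
    using h1 h2 by (simp add: H.m_closed H.m_inv_closed subgroup_int_pow_closed[OF sH])
  show ?thesis
  proof (cases "s = 0 \<and> t = 0")
    case True
    then have ap: "a [^] p \<in> H" and bq: "b [^] q \<in> H" using h1 h2 h1c h2c by auto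
    have aH: "a \<in> H" using puW aW ap p(1) unfolding pure_def by blast
    have bH: "b \<in> H" using puW bW bq q(1) unfolding pure_def by blast
    have "S1 G H a \<subseteq> H" using S1_min[OF sH _ aH] by blast
    then have "W \<subseteq> H" unfolding W_def using S1_min[OF sH _ bH] by blast
    then have "W = H" using HW by blast
    then show ?thesis unfolding W_def[symmetric] using S1_one[OF H.subset] by (metis one_closed)
  next
    case False
    then have uv0: "u \<noteq> 0 \<or> v \<noteq> 0" unfolding u_def v_def using p q by auto
    define g where "g = gcd u v"
    have g0: "g > 0" unfolding g_def using uv0 by simp
    obtain u' v' where uv': "u = g * u'" "v = g * v'" unfolding g_def
      by (metis dvd_def gcd_dvd1 gcd_dvd2)
    obtain x y where xy: "x * u + y * v = g" using bezout_int[of u v] unfolding g_def by blast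
    have xy1: "u' * x + v' * y = 1"
    proof -
      have "g * (u' * x + v' * y) = g * 1" using xy uv' by (simp add: algebra_simps)
      then show ?thesis using g0 by simp
    qed
    define e where "e = a [^] u' \<otimes> b [^] v'"
    have ec: "e \<in> carrier G" unfolding e_def using a b by simp
    have "e [^] g = a [^] u \<otimes> b [^] v" unfolding e_def using a b uv' by (simp add: ab_pow mult.commute)
    then have egH: "e [^] g \<in> H" using uvH by simp
    have eW: "e \<in> W" unfolding e_def using aW bW sW
      by (intro subgroup.m_closed[OF sW] subgroup_int_pow_closed[OF sW]) auto
    have eH: "e \<in> H" using pure_int[OF puW eW egH _ sH Wc] g0 by simp
    define w where "w = a [^] (-y) \<otimes> b [^] x"
    have wc: "w \<in> carrier G" unfolding w_def using a b by simp
    have wW: "w \<in> W" unfolding w_def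
      by (intro subgroup.m_closed[OF sW] subgroup_int_pow_closed[OF sW] aW bW)
    have "e [^] x \<otimes> w [^] (-v') = a [^] (u' * x + (-y) * (-v')) \<otimes> b [^] (v' * x + x * (-v'))"
      unfolding e_def w_def using a b by (simp add: ab_pow ab_mult)
    also have "\<dots> = a" using xy1 a b by (simp add: algebra_simps)
    finally have ea: "e [^] x \<otimes> w [^] (-v') = a" .
    have "e [^] y \<otimes> w [^] u' = a [^] (u' * y + (-y) * u') \<otimes> b [^] (v' * y + x * u')"
      unfolding e_def w_def using a b by (simp add: ab_pow ab_mult)
    also have "\<dots> = b" using xy1 a b by (simp add: algebra_simps)
    finally have eb: "e [^] y \<otimes> w [^] u' = b" .
    have sHw: "subgroup (S1 G H w) G" by (rule S1_subgroup[OF sH wc])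
    have exH: "e [^] x \<in> H" and eyH: "e [^] y \<in> H" using subgroup_int_pow_closed[OF sH eH] by auto
    have aHw: "a \<in> S1 G H w" using S1_I[OF exH, of w "-v'"] ea by simp
    have bHw: "b \<in> S1 G H w" using S1_I[OF eyH, of w u'] eb by simp
    have "W \<subseteq> S1 G H w" unfolding W_def
      by (intro S1_min[OF sHw] bHw S1_min[OF sHw _ aHw] S1_sub H.subset)
    moreover have "S1 G H w \<subseteq> W" by (rule S1_min[OF sW HW wW])
    ultimately show ?thesis using wc unfolding W_def by blast
  qed
qed

lemma rank_one:
  assumes sH: "subgroup H G" and z: "z \<in> carrier G"
  shows "(\<And>i. i < k \<Longrightarrow> \<eta> i \<in> carrier G) \<Longrightarrow> pure G H (Sp G H \<eta> k) \<Longrightarrow>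
    (\<forall>x\<in>Sp G H \<eta> k. \<exists>j::nat. j > 0 \<and> x [^] j \<in> S1 G H z) \<Longrightarrow>
    \<exists>w\<in>carrier G. Sp G H \<eta> k = S1 G H w"
proof (induction k)
  case 0
  then show ?case using S1_one[OF subgroup.subset[OF sH]] by (metis Sp.simps(1) one_closed)
next
  case (Suc k)
  have sub: "Sp G H \<eta> k \<subseteq> Sp G H \<eta> (Suc k)"
    using S1_sub[OF Sp_carrier[OF sH], of k \<eta> "\<eta> k"] Suc.prems(1) by (simp add: less_SucI)
  have "\<exists>w\<in>carrier G. Sp G H \<eta> k = S1 G H w"
  proof (rule Suc.IH)
    show "\<And>i. i < k \<Longrightarrow> \<eta> i \<in> carrier G" using Suc.prems(1) by simp
    show "pure G H (Sp G H \<eta> k)" using pure_mono[OF Suc.prems(2) sub] .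
    show "\<forall>x\<in>Sp G H \<eta> k. \<exists>j::nat. j > 0 \<and> x [^] j \<in> S1 G H z" using Suc.prems(3) sub by blast
  qed
  then obtain w0 where w0: "w0 \<in> carrier G" "Sp G H \<eta> k = S1 G H w0" by blast
  have eq: "Sp G H \<eta> (Suc k) = S1 G (S1 G H w0) (\<eta> k)" using w0 by simp
  show ?case unfolding eq
    by (rule two_gen[OF sH w0(1) _ z]) (use Suc.prems eq in auto)
qed

end


context comm_group
begin

lemma split_free:
  assumes s: "\<And>i. i < n \<Longrightarrow> s i \<in> carrier G" and fg: "carrier G = Sp G {\<one>} s n"
    and sD: "subgroup D G"
  shows "subgroup W G \<Longrightarrow> D \<subseteq> W \<Longrightarrow> pure G D W \<Longrightarrow> (\<And>i. i < m \<Longrightarrow> g i \<in> W) \<Longrightarrow>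
    (\<forall>x\<in>W. \<exists>j::nat. j > 0 \<and> x [^] j \<in> Sp G D g m) \<Longrightarrow>
    \<exists>r\<le>m. \<exists>f. (\<forall>i<r. f i \<in> W) \<and> W = Sp G D f r \<and> freeS G D f r"
proof (induction m arbitrary: W g)
  case 0
  have "W \<subseteq> D" using "0.prems"(3,5) unfolding pure_def by auto
  then have "W = D" using "0.prems"(2) by blast
  then show ?case by auto
next
  case (Suc m)
  note sW = Suc.prems(1)
  interpret W: subgroup W G by (rule sW)
  have gc: "\<And>i. i < Suc m \<Longrightarrow> g i \<in> carrier G" using Suc.prems(4) W.subset by blast
  define T where "T = Sp G D g m"
  have sT: "subgroup T G" unfolding T_def using Sp_subgroup[OF sD] gc by simp
  have TW: "T \<subseteq> W" unfolding T_def using Sp_min[OF sW Suc.prems(2)] Suc.prems(4) by simp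
  define H where "H = isol G T W"
  have sH: "subgroup H G" unfolding H_def by (rule isol_subgroup[OF sT sW])
  have HW: "H \<subseteq> W" unfolding H_def by (rule isol_sub)
  have TH: "T \<subseteq> H" unfolding H_def using isol_base[OF subgroup.subset[OF sT], of W] TW by blast
  have DT: "D \<subseteq> T" unfolding T_def using Sp_D[OF sD] gc by simp
  have "\<exists>r\<le>m. \<exists>f. (\<forall>i<r. f i \<in> H) \<and> H = Sp G D f r \<and> freeS G D f r"
  proof (rule Suc.IH[OF sH])
    show "D \<subseteq> H" using DT TH by blast
    show "pure G D H" using pure_mono[OF Suc.prems(3) HW] .
    show "g i \<in> H" if "i < m" for i using Sp_gen[OF sD, of m g i] gc that TH unfolding T_def by auto
    show "\<forall>x\<in>H. \<exists>j::nat. j > 0 \<and> x [^] j \<in> Sp G D g m" unfolding H_def isol_def T_def by blast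
  qed
  then obtain r f where rf: "r \<le> m" "\<forall>i<r. f i \<in> H" "H = Sp G D f r" "freeS G D f r" by blast
  have Wc: "W \<subseteq> carrier G" by (rule W.subset)
  have puHW: "pure G H W"
    unfolding pure_def
  proof (intro ballI allI impI)
    fix x and j::nat assume x: "x \<in> W" "j > 0" "x [^] j \<in> H"
    then obtain k::nat where k: "k > 0" "(x [^] j) [^] k \<in> T" unfolding H_def isol_def by blast
    have xjk: "x [^] (j * k) \<in> T" using k x Wc by (simp add: nat_pow_pow)
    have jk: "j * k > 0" using x k by simp
    show "x \<in> H" unfolding H_def isol_def
      by (rule CollectI, rule conjI, rule x(1), rule exI[of _ "j * k"], rule conjI, rule jk, rule xjk)
  qed
  have WS: "W \<subseteq> Sp G {\<one>} s n" using W.subset unfolding fg[symmetric] .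
  obtain \<eta> where \<eta>: "\<forall>i<n. \<eta> i \<in> W" "W = Sp G {\<one>} \<eta> n"
    using subgroup_fg[OF s sW WS] by blast
  have \<eta>c: "\<And>i. i < n \<Longrightarrow> \<eta> i \<in> carrier G" using \<eta>(1) Wc by blast
  have WH: "W = Sp G H \<eta> n"
  proof
    show "W \<subseteq> Sp G H \<eta> n" using \<eta>(2) Sp_mono[of "{\<one>}" H] subgroup.one_closed[OF sH] by blast
    show "Sp G H \<eta> n \<subseteq> W" using Sp_min[OF sW HW] \<eta>(1) by blast
  qed
  have "\<exists>w\<in>carrier G. Sp G H \<eta> n = S1 G H w"
  proof (rule rank_one[OF sH, of "g m"])
    show "g m \<in> carrier G" using gc by simp
    show "\<And>i. i < n \<Longrightarrow> \<eta> i \<in> carrier G" by (rule \<eta>c)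
    show "pure G H (Sp G H \<eta> n)" using puHW WH by simp
    show "\<forall>x\<in>Sp G H \<eta> n. \<exists>j::nat. j > 0 \<and> x [^] j \<in> S1 G H (g m)"
    proof
      fix x assume "x \<in> Sp G H \<eta> n"
      then have "x \<in> W" using WH by simp
      then obtain j::nat where "j > 0" "x [^] j \<in> Sp G D g (Suc m)" using Suc.prems(5) by blast
      moreover have "Sp G D g (Suc m) \<subseteq> S1 G H (g m)" using S1_mono[OF TH] unfolding T_def by simp
      ultimately show "\<exists>j::nat. j > 0 \<and> x [^] j \<in> S1 G H (g m)" by blast
    qed
  qed
  then obtain w where w: "w \<in> carrier G" "W = S1 G H w" using WH by auto
  have wW: "w \<in> W" using w S1_gen[OF sH w(1)] by simp
  show ?case
  proof (cases "w \<in> H")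
    case True
    then have "W = H" using w(2) S1_min[OF sH _ True] HW by blast
    then show ?thesis using rf by (metis le_SucI)
  next
    case False
    define f' where "f' = f(r := w)"
    have eqS: "Sp G D f' r = Sp G D f r" by (rule Sp_cong) (simp add: f'_def)
    have eqF: "freeS G D f' r = freeS G D f r" by (rule freeS_cong) (simp add: f'_def)
    have "W = Sp G D f' (Suc r)" using w(2) eqS rf(3) by (simp add: f'_def)
    moreover have "freeS G D f' (Suc r)"
    proof -
      have "t = 0" if "w [^] t \<in> H" for t::int
      proof (rule ccontr)
        assume "t \<noteq> 0"
        then have "w \<in> H" using pure_int[OF puHW wW that _ sH Wc] by blast
        then show False using False by blast
      qed
      then have "\<forall>t::int. f' r [^] t \<in> Sp G D f' r \<longrightarrow> t = 0" using eqS rf(3) by (simp add: f'_def)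
      then show ?thesis using eqF rf(4) by simp
    qed
    moreover have "\<forall>i<Suc r. f' i \<in> W" using rf(2) HW wW by (auto simp: f'_def)
    ultimately show ?thesis using rf(1) by (metis Suc_le_mono)
  qed
qed

end



definition siso :: "('b,'n) monoid_scheme \<Rightarrow> 'b set \<Rightarrow> 'b set \<Rightarrow> ('b \<Rightarrow> 'b) \<Rightarrow> bool" where
  "siso M B B' h = (bij_betw h B B' \<and> (\<forall>x\<in>B. \<forall>y\<in>B. h (monoid.mult M x y) = monoid.mult M (h x) (h y)))"

context comm_group
begin

lemma free_uniq:
  assumes sX: "subgroup Xs G" and a: "a \<in> carrier G" and fa: "\<forall>t::int. a [^] t \<in> Xs \<longrightarrow> t = 0"
    and xy: "x \<in> Xs" "y \<in> Xs" and eq: "x \<otimes> a [^] (t::int) = y \<otimes> a [^] (s::int)"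
  shows "x = y \<and> t = s"
proof -
  interpret Xs: subgroup Xs G by (rule sX)
  have xc: "x \<in> carrier G" and yc: "y \<in> carrier G" using xy Xs.subset by auto
  define c where "c = inv y \<otimes> x"
  have cX: "c \<in> Xs" unfolding c_def using xy by (metis Xs.m_closed Xs.m_inv_closed)
  have cc: "c \<in> carrier G" using cX Xs.subset by blast
  have "c \<otimes> a [^] t = inv y \<otimes> (x \<otimes> a [^] t)" unfolding c_def using xc yc a by (simp add: m_assoc)
  also have "\<dots> = inv y \<otimes> (y \<otimes> a [^] s)" using eq by simp
  also have "\<dots> = a [^] s" using yc a by (simp add: m_assoc[symmetric])
  finally have ca: "c \<otimes> a [^] t = a [^] s" .
  have "a [^] (s - t) = a [^] s \<otimes> inv (a [^] t)" using a by (simp add: int_pow_diff)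
  also have "\<dots> = c" unfolding ca[symmetric] using cc a by (simp add: m_assoc)
  finally have "a [^] (s - t) \<in> Xs" using cX by simp
  then have st: "t = s" using fa by auto
  then have "x = y" using eq xc yc a by simp
  then show ?thesis using st by simp
qed

lemma ext_step:
  assumes sX: "subgroup Xs G" and sX': "subgroup Xs' G" and h: "siso G Xs Xs' h"
    and a: "a \<in> carrier G" and a': "a' \<in> carrier G"
    and fa: "\<forall>t::int. a [^] t \<in> Xs \<longrightarrow> t = 0" and fa': "\<forall>t::int. a' [^] t \<in> Xs' \<longrightarrow> t = 0"
  shows "\<exists>h'. siso G (S1 G Xs a) (S1 G Xs' a') h' \<and> (\<forall>x\<in>Xs. h' x = h x)"
proof -
  interpret Xs: subgroup Xs G by (rule sX)
  interpret Xs': subgroup Xs' G by (rule sX')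
  have hb: "bij_betw h Xs Xs'" and hm: "\<forall>x\<in>Xs. \<forall>y\<in>Xs. h (x \<otimes> y) = h x \<otimes> h y"
    using h unfolding siso_def by blast+
  have hX: "h x \<in> Xs'" if "x \<in> Xs" for x by (rule bij_betw_apply[OF hb that])
  define h' where "h' u = (THE v. \<exists>x (t::int). x \<in> Xs \<and> u = x \<otimes> a [^] t \<and> v = h x \<otimes> a' [^] t)" for u
  have h'eq: "h' (x \<otimes> a [^] t) = h x \<otimes> a' [^] t" if "x \<in> Xs" for x and t::int
    unfolding h'_def
  proof (rule the_equality)
    show "\<exists>x' (t'::int). x' \<in> Xs \<and> x \<otimes> a [^] t = x' \<otimes> a [^] t' \<and> h x \<otimes> a' [^] t = h x' \<otimes> a' [^] t'"
      by (rule exI[of _ x], rule exI[of _ t]) (simp add: that)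
    fix v assume "\<exists>x' (t'::int). x' \<in> Xs \<and> x \<otimes> a [^] t = x' \<otimes> a [^] t' \<and> v = h x' \<otimes> a' [^] t'"
    then obtain x' and t'::int where x': "x' \<in> Xs" "x \<otimes> a [^] t = x' \<otimes> a [^] t'" "v = h x' \<otimes> a' [^] t'"
      by blast
    have "x = x' \<and> t = t'" by (rule free_uniq[OF sX a fa that x'(1) x'(2)])
    then show "v = h x \<otimes> a' [^] t" using x' by simp
  qed
  have hom: "\<forall>u\<in>S1 G Xs a. \<forall>w\<in>S1 G Xs a. h' (u \<otimes> w) = h' u \<otimes> h' w"
  proof (intro ballI)
    fix u w assume "u \<in> S1 G Xs a" "w \<in> S1 G Xs a"
    moreover obtain x and t::int where u: "u = x \<otimes> a [^] t" "x \<in> Xs" using \<open>u \<in> S1 G Xs a\<close> by (rule S1_E)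
    moreover obtain y and s::int where w: "w = y \<otimes> a [^] s" "y \<in> Xs" using \<open>w \<in> S1 G Xs a\<close> by (rule S1_E)
    ultimately have xc: "x \<in> carrier G" "y \<in> carrier G" "h x \<in> carrier G" "h y \<in> carrier G"
      using Xs.subset Xs'.subset hX by auto
    have uw: "u \<otimes> w = (x \<otimes> y) \<otimes> a [^] (t + s)" unfolding u(1) w(1) using xc a by (simp add: int_pow_mult m_ac)
    have "h' (u \<otimes> w) = h (x \<otimes> y) \<otimes> a' [^] (t + s)" unfolding uw by (rule h'eq[OF Xs.m_closed[OF u(2) w(2)]])
    also have "h (x \<otimes> y) = h x \<otimes> h y" using hm u(2) w(2) by blast
    also have "(h x \<otimes> h y) \<otimes> a' [^] (t + s) = (h x \<otimes> a' [^] t) \<otimes> (h y \<otimes> a' [^] s)"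
      using xc a' by (simp add: int_pow_mult m_ac)
    also have "h x \<otimes> a' [^] t = h' u" unfolding u(1) by (rule h'eq[OF u(2), symmetric])
    also have "h y \<otimes> a' [^] s = h' w" unfolding w(1) by (rule h'eq[OF w(2), symmetric])
    finally show "h' (u \<otimes> w) = h' u \<otimes> h' w" .
  qed
  have inj: "inj_on h' (S1 G Xs a)"
  proof (rule inj_onI)
    fix u w assume "u \<in> S1 G Xs a" "w \<in> S1 G Xs a" "h' u = h' w"
    moreover obtain x and t::int where u: "u = x \<otimes> a [^] t" "x \<in> Xs" using \<open>u \<in> S1 G Xs a\<close> by (rule S1_E)
    moreover obtain y and s::int where w: "w = y \<otimes> a [^] s" "y \<in> Xs" using \<open>w \<in> S1 G Xs a\<close> by (rule S1_E)
    ultimately have "h x \<otimes> a' [^] t = h y \<otimes> a' [^] s" using h'eq[OF u(2), of t] h'eq[OF w(2), of s] by simp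
    then have "h x = h y \<and> t = s" by (rule free_uniq[OF sX' a' fa' hX[OF u(2)] hX[OF w(2)]])
    moreover have "inj_on h Xs" using hb unfolding bij_betw_def by blast
    ultimately have "x = y \<and> t = s" using u(2) w(2) unfolding inj_on_def by blast
    then show "u = w" using u w by simp
  qed
  have img: "h' ` S1 G Xs a = S1 G Xs' a'"
  proof
    show "h' ` S1 G Xs a \<subseteq> S1 G Xs' a'"
    proof
      fix v assume "v \<in> h' ` S1 G Xs a"
      then obtain u where "u \<in> S1 G Xs a" "v = h' u" by blast
      moreover obtain x and t::int where u: "u = x \<otimes> a [^] t" "x \<in> Xs" using \<open>u \<in> S1 G Xs a\<close> by (rule S1_E)
      ultimately have "v = h x \<otimes> a' [^] t" using h'eq[OF u(2), of t] by simp
      then show "v \<in> S1 G Xs' a'" using S1_I[OF hX[OF u(2)], of a' t] by simp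
    qed
    show "S1 G Xs' a' \<subseteq> h' ` S1 G Xs a"
    proof
      fix v assume "v \<in> S1 G Xs' a'"
      then obtain x' and t::int where v: "v = x' \<otimes> a' [^] t" "x' \<in> Xs'" by (rule S1_E)
      then obtain x where x: "x \<in> Xs" "x' = h x" using hb unfolding bij_betw_def by blast
      then have "v = h' (x \<otimes> a [^] t)" unfolding v(1) using h'eq[OF x(1), of t] by simp
      moreover have "x \<otimes> a [^] t \<in> S1 G Xs a" using x S1_I by blast
      ultimately show "v \<in> h' ` S1 G Xs a" by blast
    qed
  qed
  have agree: "\<forall>x\<in>Xs. h' x = h x"
  proof
    fix x assume x: "x \<in> Xs"
    then have xc: "x \<in> carrier G" "h x \<in> carrier G" using Xs.subset Xs'.subset hX by auto
    have "h' (x \<otimes> a [^] (0::int)) = h x \<otimes> a' [^] (0::int)" by (rule h'eq[OF x])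
    then show "h' x = h x" using xc by simp
  qed
  have "siso G (S1 G Xs a) (S1 G Xs' a') h'" unfolding siso_def bij_betw_def using hom inj img by simp
  then show ?thesis using agree by blast
qed

lemma iso_free:
  assumes sD: "subgroup D G"
  shows "(\<And>i. i < r \<Longrightarrow> f i \<in> carrier G) \<Longrightarrow> (\<And>i. i < r \<Longrightarrow> f' i \<in> carrier G) \<Longrightarrow>
    freeS G D f r \<Longrightarrow> freeS G D f' r \<Longrightarrow>
    \<exists>h. siso G (Sp G D f r) (Sp G D f' r) h \<and> (\<forall>d\<in>D. h d = d)"
proof (induction r)
  case 0
  have "siso G D D (\<lambda>x. x)" unfolding siso_def by (simp add: bij_betw_id[unfolded id_def])
  then show ?case by (intro exI[of _ "\<lambda>x. x"]) simp
next
  case (Suc r)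
  have "\<exists>h. siso G (Sp G D f r) (Sp G D f' r) h \<and> (\<forall>d\<in>D. h d = d)"
    using Suc by simp
  then obtain h where h: "siso G (Sp G D f r) (Sp G D f' r) h" "\<forall>d\<in>D. h d = d" by blast
  have s1: "subgroup (Sp G D f r) G" using Sp_subgroup[OF sD] Suc.prems(1) by simp
  have s2: "subgroup (Sp G D f' r) G" using Sp_subgroup[OF sD] Suc.prems(2) by simp
  have "\<exists>h'. siso G (S1 G (Sp G D f r) (f r)) (S1 G (Sp G D f' r) (f' r)) h' \<and> (\<forall>x\<in>Sp G D f r. h' x = h x)"
    by (rule ext_step[OF s1 s2 h(1)]) (use Suc.prems in auto)
  then obtain h' where h': "siso G (S1 G (Sp G D f r) (f r)) (S1 G (Sp G D f' r) (f' r)) h'"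
    "\<forall>x\<in>Sp G D f r. h' x = h x" by blast
  have "D \<subseteq> Sp G D f r" using Sp_D[OF sD] Suc.prems(1) by simp
  then show ?case using h' h(2) by (intro exI[of _ h']) auto
qed

end



lemma amalg_words_append[simp]: "u @ v \<in> amalg_words G H \<longleftrightarrow> u \<in> amalg_words G H \<and> v \<in> amalg_words G H"
  unfolding amalg_words_def by auto

lemma amalg_words_Cons[simp]: "a # v \<in> amalg_words G H \<longleftrightarrow> a \<in> Inl ` carrier G \<union> Inr ` carrier H \<and> v \<in> amalg_words G H"
  unfolding amalg_words_def by auto

lemma amalg_words_Nil[simp]: "[] \<in> amalg_words G H"
  unfolding amalg_words_def by auto

lemma amalg_rel_words:
  assumes "\<And>k. k \<in> carrier K \<Longrightarrow> f k \<in> carrier G" "\<And>k. k \<in> carrier K \<Longrightarrow> g k \<in> carrier H"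
    "\<one>\<^bsub>G\<^esub> \<in> carrier G" "\<one>\<^bsub>H\<^esub> \<in> carrier H"
    "\<And>x y. x \<in> carrier G \<Longrightarrow> y \<in> carrier G \<Longrightarrow> x \<otimes>\<^bsub>G\<^esub> y \<in> carrier G"
    "\<And>x y. x \<in> carrier H \<Longrightarrow> y \<in> carrier H \<Longrightarrow> x \<otimes>\<^bsub>H\<^esub> y \<in> carrier H"
  shows "(u, v) \<in> amalg_rel G H K f g \<Longrightarrow> u \<in> amalg_words G H \<and> v \<in> amalg_words G H"
  by (induction rule: amalg_rel.induct) (auto simp: assms)

lemma amalg_rel_ctx:
  "(u, v) \<in> amalg_rel G H K f g \<Longrightarrow> p \<in> amalg_words G H \<Longrightarrow> q \<in> amalg_words G H \<Longrightarrow>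
   (p @ u @ q, p @ v @ q) \<in> amalg_rel G H K f g"
proof (induction rule: amalg_rel.induct)
  case (rrefl w) then show ?case by (auto intro: amalg_rel.rrefl)
next
  case (rsym u v) then show ?case by (auto intro: amalg_rel.rsym)
next
  case (rtrans u v w) then show ?case by (meson amalg_rel.rtrans)
next
  case (unitL u v) then show ?case using amalg_rel.unitL[of "p @ u" G H "v @ q"] by simp
next
  case (unitR u v) then show ?case using amalg_rel.unitR[of "p @ u" G H "v @ q"] by simp
next
  case (mergeL u v x y) then show ?case using amalg_rel.mergeL[of "p @ u" G H "v @ q" x y] by simp
next
  case (mergeR u v x y) then show ?case using amalg_rel.mergeR[of "p @ u" G H "v @ q" x y] by simp
next
  case (ident u v k) then show ?case using amalg_rel.ident[of "p @ u" G H "v @ q" k K f g] by simp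
qed

lemma amalg_rel_app:
  assumes wd: "\<And>u v. (u, v) \<in> amalg_rel G H K f g \<Longrightarrow> u \<in> amalg_words G H \<and> v \<in> amalg_words G H"
  shows "(u, u') \<in> amalg_rel G H K f g \<Longrightarrow> (v, v') \<in> amalg_rel G H K f g \<Longrightarrow>
    (u @ v, u' @ v') \<in> amalg_rel G H K f g"
proof -
  assume 1: "(u, u') \<in> amalg_rel G H K f g" and 2: "(v, v') \<in> amalg_rel G H K f g"
  have "(u @ v, u' @ v) \<in> amalg_rel G H K f g"
    using amalg_rel_ctx[OF 1, of "[]" v] wd[OF 2] by simp
  moreover have "(u' @ v, u' @ v') \<in> amalg_rel G H K f g"
    using amalg_rel_ctx[OF 2, of u' "[]"] wd[OF 1] by simp
  ultimately show ?thesis by (rule amalg_rel.rtrans)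
qed

lemma amalg_equiv:
  assumes wd: "\<And>u v. (u, v) \<in> amalg_rel G H K f g \<Longrightarrow> u \<in> amalg_words G H \<and> v \<in> amalg_words G H"
  shows "equiv (amalg_words G H) (amalg_rel G H K f g)"
proof (rule equivI)
  have sub: "amalg_rel G H K f g \<subseteq> amalg_words G H \<times> amalg_words G H"
  proof
    fix p assume "p \<in> amalg_rel G H K f g"
    then show "p \<in> amalg_words G H \<times> amalg_words G H" using wd by (cases p) simp
  qed
  show "amalg_rel G H K f g \<subseteq> amalg_words G H \<times> amalg_words G H" by (rule sub)
  show "refl_on (amalg_words G H) (amalg_rel G H K f g)"
    unfolding refl_on_def by (auto intro: amalg_rel.rrefl)
  show "sym (amalg_rel G H K f g)" unfolding sym_def by (auto intro: amalg_rel.rsym)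
  show "trans (amalg_rel G H K f g)" unfolding trans_def by (blast intro: amalg_rel.rtrans)
qed

definition wmap :: "('b \<Rightarrow> 'b) \<Rightarrow> ('a + 'b) list \<Rightarrow> ('a + 'b) list" where
  "wmap h = map (map_sum id h)"

lemma wmap_simps[simp]: "wmap h [] = []" "wmap h (u @ v) = wmap h u @ wmap h v"
  "wmap h (Inl x # v) = Inl x # wmap h v" "wmap h (Inr y # v) = Inr (h y) # wmap h v"
  unfolding wmap_def by auto

lemma wmap_words:
  assumes "h ` carrier H \<subseteq> carrier H'"
  shows "w \<in> amalg_words G H \<Longrightarrow> wmap h w \<in> amalg_words G H'"
  unfolding amalg_words_def wmap_def using assms by (induction w) auto

lemma wmap_rel:
  assumes hcs: "h ` carrier H \<subseteq> carrier H'"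
    and hm: "\<forall>x\<in>carrier H. \<forall>y\<in>carrier H. h (x \<otimes>\<^bsub>H\<^esub> y) = h x \<otimes>\<^bsub>H'\<^esub> h y"
    and h1: "h \<one>\<^bsub>H\<^esub> = \<one>\<^bsub>H'\<^esub>"
    and hk: "\<forall>k\<in>carrier K. h (g k) = g k"
  shows "(u, v) \<in> amalg_rel G H K f g \<Longrightarrow> (wmap h u, wmap h v) \<in> amalg_rel G H' K f g"
proof (induction rule: amalg_rel.induct)
  case (rrefl w) then show ?case using wmap_words[OF hcs, of _ G] by (auto intro: amalg_rel.rrefl)
next
  case (rsym u v) then show ?case by (auto intro: amalg_rel.rsym)
next
  case (rtrans u v w) then show ?case by (meson amalg_rel.rtrans)
next
  case (unitL u v) then show ?case using wmap_words[OF hcs, of _ G] amalg_rel.unitL[of "wmap h u" G H' "wmap h v" K f g] by simp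
next
  case (unitR u v) then show ?case using wmap_words[OF hcs, of _ G] amalg_rel.unitR[of "wmap h u" G H' "wmap h v" K f g] h1 by simp
next
  case (mergeL u v x y) then show ?case using wmap_words[OF hcs, of _ G] amalg_rel.mergeL[of "wmap h u" G H' "wmap h v" x y K f g] by simp
next
  case (mergeR u v x y)
  then have "h x \<in> carrier H'" "h y \<in> carrier H'" using hcs by auto
  with mergeR show ?case using wmap_words[OF hcs, of _ G] amalg_rel.mergeR[of "wmap h u" G H' "wmap h v" "h x" "h y" K f g] hm hcs
    by auto
next
  case (ident u v k)
  then show ?case using wmap_words[OF hcs, of _ G] amalg_rel.ident[of "wmap h u" G H' "wmap h v" k K f g] hk
    by simp
qed

lemma wmap_inv:
  assumes "\<forall>x\<in>carrier H. h' (h x) = x"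
  shows "w \<in> amalg_words G H \<Longrightarrow> wmap h' (wmap h w) = w"
  unfolding amalg_words_def wmap_def using assms by (induction w) auto

lemma amalg_transport:
  fixes G :: "('a, 'm) monoid_scheme" and H H' :: "('b, 'n) monoid_scheme" and K :: "('c, 'o) monoid_scheme"
  assumes hc: "\<And>x. x \<in> carrier H \<Longrightarrow> h x \<in> carrier H'"
    and hm: "\<And>x y. x \<in> carrier H \<Longrightarrow> y \<in> carrier H \<Longrightarrow> h (x \<otimes>\<^bsub>H\<^esub> y) = h x \<otimes>\<^bsub>H'\<^esub> h y"
    and h1: "h \<one>\<^bsub>H\<^esub> = \<one>\<^bsub>H'\<^esub>"
    and hk: "\<And>k. k \<in> carrier K \<Longrightarrow> h (g k) = g k"
    and h'c: "\<And>x. x \<in> carrier H' \<Longrightarrow> h' x \<in> carrier H"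
    and h'm: "\<And>x y. x \<in> carrier H' \<Longrightarrow> y \<in> carrier H' \<Longrightarrow> h' (x \<otimes>\<^bsub>H'\<^esub> y) = h' x \<otimes>\<^bsub>H\<^esub> h' y"
    and h'1: "h' \<one>\<^bsub>H'\<^esub> = \<one>\<^bsub>H\<^esub>"
    and h'k: "\<And>k. k \<in> carrier K \<Longrightarrow> h' (g k) = g k"
    and inv1: "\<And>x. x \<in> carrier H \<Longrightarrow> h' (h x) = x"
    and inv2: "\<And>x. x \<in> carrier H' \<Longrightarrow> h (h' x) = x"
    and wd: "\<And>u v. (u, v) \<in> amalg_rel G H K f g \<Longrightarrow> u \<in> amalg_words G H \<and> v \<in> amalg_words G H"
    and wd': "\<And>u v. (u, v) \<in> amalg_rel G H' K f g \<Longrightarrow> u \<in> amalg_words G H' \<and> v \<in> amalg_words G H'"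
  shows "amalg_prod G H K f g \<cong> amalg_prod G H' K f g"
proof -
  let ?R = "amalg_rel G H K f g" and ?R' = "amalg_rel G H' K f g"
  let ?W = "amalg_words G H" and ?W' = "amalg_words G H'"
  have eq: "equiv ?W ?R" by (rule amalg_equiv[OF wd])
  have eq': "equiv ?W' ?R'" by (rule amalg_equiv[OF wd'])
  have hcs: "h ` carrier H \<subseteq> carrier H'" using hc by blast
  have h'cs: "h' ` carrier H' \<subseteq> carrier H" using h'c by blast
  have hms: "\<forall>x\<in>carrier H. \<forall>y\<in>carrier H. h (x \<otimes>\<^bsub>H\<^esub> y) = h x \<otimes>\<^bsub>H'\<^esub> h y" using hm by blast
  have h'ms: "\<forall>x\<in>carrier H'. \<forall>y\<in>carrier H'. h' (x \<otimes>\<^bsub>H'\<^esub> y) = h' x \<otimes>\<^bsub>H\<^esub> h' y" using h'm by blast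
  have inv1s: "\<forall>x\<in>carrier H. h' (h x) = x" using inv1 by blast
  have inv2s: "\<forall>x\<in>carrier H'. h (h' x) = x" using inv2 by blast
  have hks: "\<forall>k\<in>carrier K. h (g k) = g k" using hk by blast
  have h'ks: "\<forall>k\<in>carrier K. h' (g k) = g k" using h'k by blast
  have mr: "(wmap h u, wmap h v) \<in> ?R'" if "(u, v) \<in> ?R" for u v
    using wmap_rel[OF hcs hms h1 hks] that by blast
  have mr': "(wmap h' u, wmap h' v) \<in> ?R" if "(u, v) \<in> ?R'" for u v
    using wmap_rel[OF h'cs h'ms h'1 h'ks] that by blast
  have wmw: "wmap h w \<in> ?W'" if "w \<in> ?W" for w using wmap_words[OF hcs, of _ G] that by blast
  have wmw': "wmap h' w \<in> ?W" if "w \<in> ?W'" for w using wmap_words[OF h'cs, of _ G] that by blast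
  define F where "F C = ?R' `` (wmap h ` C)" for C
  have Fcl: "F (?R `` {w}) = ?R' `` {wmap h w}" if w: "w \<in> ?W" for w
  proof
    show "F (?R `` {w}) \<subseteq> ?R' `` {wmap h w}"
      unfolding F_def using mr by (blast intro: amalg_rel.rtrans)
    show "?R' `` {wmap h w} \<subseteq> F (?R `` {w})"
      unfolding F_def using equiv_class_self[OF eq w] by blast
  qed
  have hom: "F \<in> hom (amalg_prod G H K f g) (amalg_prod G H' K f g)"
  proof (rule homI)
    fix C assume "C \<in> carrier (amalg_prod G H K f g)"
    then have "C \<in> ?W // ?R" by (simp add: amalg_prod_def)
    then obtain w where w: "C = ?R `` {w}" "w \<in> ?W" by (rule quotientE)
    show "F C \<in> carrier (amalg_prod G H' K f g)"
      unfolding w(1) Fcl[OF w(2)] using wmw[OF w(2)] by (simp add: amalg_prod_def quotientI)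
  next
    fix C D assume "C \<in> carrier (amalg_prod G H K f g)" "D \<in> carrier (amalg_prod G H K f g)"
    then have "C \<in> ?W // ?R" "D \<in> ?W // ?R" by (simp_all add: amalg_prod_def)
    then obtain w1 w2 where w: "C = ?R `` {w1}" "w1 \<in> ?W" "D = ?R `` {w2}" "w2 \<in> ?W"
      by (meson quotientE)
    define x0 where "x0 = (SOME x. x \<in> C)"
    define y0 where "y0 = (SOME x. x \<in> D)"
    have x0: "(w1, x0) \<in> ?R" unfolding x0_def w(1) using equiv_class_self[OF eq w(2)]
      by (metis Image_singleton_iff someI)
    have y0: "(w2, y0) \<in> ?R" unfolding y0_def w(3) using equiv_class_self[OF eq w(4)]
      by (metis Image_singleton_iff someI)
    have x0w: "x0 \<in> ?W" "y0 \<in> ?W" using wd x0 y0 by auto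
    have "C \<otimes>\<^bsub>amalg_prod G H K f g\<^esub> D = ?R `` {x0 @ y0}"
      unfolding x0_def y0_def by (simp add: amalg_prod_def)
    then have lhs: "F (C \<otimes>\<^bsub>amalg_prod G H K f g\<^esub> D) = ?R' `` {wmap h x0 @ wmap h y0}"
      using Fcl[of "x0 @ y0"] x0w by simp
    define x1 where "x1 = (SOME x. x \<in> F C)"
    define y1 where "y1 = (SOME x. x \<in> F D)"
    have FC: "F C = ?R' `` {wmap h w1}" "F D = ?R' `` {wmap h w2}" using Fcl w by auto
    have x1: "(wmap h w1, x1) \<in> ?R'" unfolding x1_def FC
      using equiv_class_self[OF eq' wmw[OF w(2)]] by (metis Image_singleton_iff someI)
    have y1: "(wmap h w2, y1) \<in> ?R'" unfolding y1_def FC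
      using equiv_class_self[OF eq' wmw[OF w(4)]] by (metis Image_singleton_iff someI)
    have rhs: "F C \<otimes>\<^bsub>amalg_prod G H' K f g\<^esub> F D = ?R' `` {x1 @ y1}"
      unfolding x1_def y1_def by (simp add: amalg_prod_def)
    have a: "(wmap h x0, x1) \<in> ?R'" using mr[OF x0] x1 by (meson amalg_rel.rsym amalg_rel.rtrans)
    have b: "(wmap h y0, y1) \<in> ?R'" using mr[OF y0] y1 by (meson amalg_rel.rsym amalg_rel.rtrans)
    have "(wmap h x0 @ wmap h y0, x1 @ y1) \<in> ?R'" by (rule amalg_rel_app[OF wd' a b])
    then show "F (C \<otimes>\<^bsub>amalg_prod G H K f g\<^esub> D) = F C \<otimes>\<^bsub>amalg_prod G H' K f g\<^esub> F D"
      unfolding lhs rhs using eq' by (simp add: equiv_class_eq_iff)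
  qed
  have bij: "bij_betw F (carrier (amalg_prod G H K f g)) (carrier (amalg_prod G H' K f g))"
  proof (rule bij_betw_imageI)
    show "inj_on F (carrier (amalg_prod G H K f g))"
    proof (rule inj_onI)
      fix C D assume "C \<in> carrier (amalg_prod G H K f g)" "D \<in> carrier (amalg_prod G H K f g)" "F C = F D"
      then have "C \<in> ?W // ?R" "D \<in> ?W // ?R" "F C = F D" by (simp_all add: amalg_prod_def)
      then obtain w1 w2 where w: "C = ?R `` {w1}" "w1 \<in> ?W" "D = ?R `` {w2}" "w2 \<in> ?W" "F C = F D"
        by (meson quotientE)
      then have "(wmap h w1, wmap h w2) \<in> ?R'"
        using Fcl eq' wmw by (simp add: eq_equiv_class_iff)
      then have "(wmap h' (wmap h w1), wmap h' (wmap h w2)) \<in> ?R" by (rule mr')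
      then have "(w1, w2) \<in> ?R" using wmap_inv[of H h' h, OF inv1s, of _ G] w by simp
      then show "C = D" using w eq by (simp add: eq_equiv_class_iff)
    qed
    show "F ` carrier (amalg_prod G H K f g) = carrier (amalg_prod G H' K f g)"
    proof
      show "F ` carrier (amalg_prod G H K f g) \<subseteq> carrier (amalg_prod G H' K f g)"
        using hom unfolding hom_def by auto
      show "carrier (amalg_prod G H' K f g) \<subseteq> F ` carrier (amalg_prod G H K f g)"
      proof
        fix C' assume "C' \<in> carrier (amalg_prod G H' K f g)"
        then have "C' \<in> ?W' // ?R'" by (simp add: amalg_prod_def)
        then obtain w' where w': "C' = ?R' `` {w'}" "w' \<in> ?W'" by (rule quotientE)
        have ww: "wmap h' w' \<in> ?W" using wmw'[OF w'(2)] .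
        have "F (?R `` {wmap h' w'}) = C'" using Fcl[OF ww] wmap_inv[of H' h h', OF inv2s, of _ G, OF w'(2)] w' by simp
        moreover have "?R `` {wmap h' w'} \<in> carrier (amalg_prod G H K f g)"
          using ww by (simp add: amalg_prod_def quotientI)
        ultimately show "C' \<in> F ` carrier (amalg_prod G H K f g)" by blast
      qed
    qed
  qed
  show ?thesis unfolding is_iso_def iso_def using hom bij by blast
qed




lemma transport_subgroups:
  fixes G0 :: "('a, 'm) monoid_scheme" and P :: "('b, 'n) monoid_scheme"
    and A :: "('c, 'o) monoid_scheme"
  assumes gG: "group G0" and cP: "comm_group P"
    and \<phi>: "\<And>k. k \<in> carrier A \<Longrightarrow> \<phi> k \<in> carrier G0"
    and sB: "subgroup B P" and sB': "subgroup B' P"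
    and KB: "\<And>k. k \<in> carrier A \<Longrightarrow> \<psi> k \<in> B" and KB': "\<And>k. k \<in> carrier A \<Longrightarrow> \<psi> k \<in> B'"
    and h: "siso P B B' h" and h1: "h \<one>\<^bsub>P\<^esub> = \<one>\<^bsub>P\<^esub>" and hk: "\<And>k. k \<in> carrier A \<Longrightarrow> h (\<psi> k) = \<psi> k"
  shows "amalg_prod G0 (P\<lparr>carrier := B\<rparr>) A \<phi> \<psi> \<cong> amalg_prod G0 (P\<lparr>carrier := B'\<rparr>) A \<phi> \<psi>"
proof -
  interpret G0: group G0 by (rule gG)
  interpret P: comm_group P by (rule cP)
  interpret B: subgroup B P by (rule sB)
  interpret B': subgroup B' P by (rule sB')
  have hb: "bij_betw h B B'" and hm: "\<forall>x\<in>B. \<forall>y\<in>B. h (x \<otimes>\<^bsub>P\<^esub> y) = h x \<otimes>\<^bsub>P\<^esub> h y"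
    using h unfolding siso_def by blast+
  have inj: "inj_on h B" and img: "h ` B = B'" using hb unfolding bij_betw_def by blast+
  define h' where "h' = inv_into B h"
  have hc: "h x \<in> B'" if "x \<in> B" for x using img that by blast
  have h'c: "h' x \<in> B" if "x \<in> B'" for x unfolding h'_def using img that by (metis inv_into_into)
  have inv1: "h' (h x) = x" if "x \<in> B" for x unfolding h'_def using inv_into_f_f[OF inj that] .
  have inv2: "h (h' x) = x" if "x \<in> B'" for x unfolding h'_def using img that by (metis f_inv_into_f)
  have h'm: "h' (x \<otimes>\<^bsub>P\<^esub> y) = h' x \<otimes>\<^bsub>P\<^esub> h' y" if "x \<in> B'" "y \<in> B'" for x y
  proof -
    have "x \<otimes>\<^bsub>P\<^esub> y = h (h' x \<otimes>\<^bsub>P\<^esub> h' y)" using hm h'c that inv2 by simp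
    then show ?thesis using inv1 h'c that B.m_closed by simp
  qed
  show ?thesis
  proof (rule amalg_transport[where h = h and h' = h'])
    show "\<And>x. x \<in> carrier (P\<lparr>carrier := B\<rparr>) \<Longrightarrow> h x \<in> carrier (P\<lparr>carrier := B'\<rparr>)" using hc by simp
    show "\<And>x y. x \<in> carrier (P\<lparr>carrier := B\<rparr>) \<Longrightarrow> y \<in> carrier (P\<lparr>carrier := B\<rparr>) \<Longrightarrow>
      h (x \<otimes>\<^bsub>P\<lparr>carrier := B\<rparr>\<^esub> y) = h x \<otimes>\<^bsub>P\<lparr>carrier := B'\<rparr>\<^esub> h y" using hm by simp
    show "h \<one>\<^bsub>P\<lparr>carrier := B\<rparr>\<^esub> = \<one>\<^bsub>P\<lparr>carrier := B'\<rparr>\<^esub>" using h1 by simp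
    show "\<And>k. k \<in> carrier A \<Longrightarrow> h (\<psi> k) = \<psi> k" by (rule hk)
    show "\<And>x. x \<in> carrier (P\<lparr>carrier := B'\<rparr>) \<Longrightarrow> h' x \<in> carrier (P\<lparr>carrier := B\<rparr>)" using h'c by simp
    show "\<And>x y. x \<in> carrier (P\<lparr>carrier := B'\<rparr>) \<Longrightarrow> y \<in> carrier (P\<lparr>carrier := B'\<rparr>) \<Longrightarrow>
      h' (x \<otimes>\<^bsub>P\<lparr>carrier := B'\<rparr>\<^esub> y) = h' x \<otimes>\<^bsub>P\<lparr>carrier := B\<rparr>\<^esub> h' y" using h'm by simp
    show "h' \<one>\<^bsub>P\<lparr>carrier := B'\<rparr>\<^esub> = \<one>\<^bsub>P\<lparr>carrier := B\<rparr>\<^esub>" using inv1[OF B.one_closed] h1 by simp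
    show "\<And>k. k \<in> carrier A \<Longrightarrow> h' (\<psi> k) = \<psi> k" using inv1 KB hk by metis
    show "\<And>x. x \<in> carrier (P\<lparr>carrier := B\<rparr>) \<Longrightarrow> h' (h x) = x" using inv1 by simp
    show "\<And>x. x \<in> carrier (P\<lparr>carrier := B'\<rparr>) \<Longrightarrow> h (h' x) = x" using inv2 by simp
    show "\<And>u v. (u, v) \<in> amalg_rel G0 (P\<lparr>carrier := B\<rparr>) A \<phi> \<psi> \<Longrightarrow>
      u \<in> amalg_words G0 (P\<lparr>carrier := B\<rparr>) \<and> v \<in> amalg_words G0 (P\<lparr>carrier := B\<rparr>)"
      by (rule amalg_rel_words) (use \<phi> KB B.m_closed in auto)
    show "\<And>u v. (u, v) \<in> amalg_rel G0 (P\<lparr>carrier := B'\<rparr>) A \<phi> \<psi> \<Longrightarrow>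
      u \<in> amalg_words G0 (P\<lparr>carrier := B'\<rparr>) \<and> v \<in> amalg_words G0 (P\<lparr>carrier := B'\<rparr>)"
      by (rule amalg_rel_words) (use \<phi> KB' B'.m_closed in auto)
  qed
qed




theorem corollary2p4:
  fixes G0 :: "('a, 'm) monoid_scheme" and P :: "('b, 'n) monoid_scheme"
    and A :: "('c, 'o) monoid_scheme"
    and \<phi> :: "'c \<Rightarrow> 'a" and \<psi> :: "'c \<Rightarrow> 'b"
  assumes "group G0" and "comm_group P" and "group A"
    and "\<phi> \<in> hom A G0" and "inj_on \<phi> (carrier A)"
    and "\<psi> \<in> hom A P" and "inj_on \<psi> (carrier A)"
    and "\<exists>S. finite S \<and> S \<subseteq> carrier P \<and> generate P S = carrier P"
  shows "\<exists>F. finite F \<and> (\<forall>B\<in>F. subgroup B P \<and> \<psi> ` carrier A \<subseteq> B) \<and>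
           (\<forall>B. subgroup B P \<and> \<psi> ` carrier A \<subseteq> B \<longrightarrow>
              (\<exists>B'\<in>F. amalg_prod G0 (P\<lparr>carrier := B\<rparr>) A \<phi> \<psi>
                         \<cong> amalg_prod G0 (P\<lparr>carrier := B'\<rparr>) A \<phi> \<psi>))"
proof -
  interpret P: comm_group P by fact
  define K where "K = \<psi> ` carrier A"
  have gh: "group_hom A P \<psi>" using assms(3,6) P.is_group by (simp add: group_hom_def group_hom_axioms_def)
  have sK: "subgroup K P" unfolding K_def using group_hom.img_is_subgroup[OF gh] .
  have Kc: "K \<subseteq> carrier P" using sK subgroup.subset by blast
  have \<phi>c: "\<And>k. k \<in> carrier A \<Longrightarrow> \<phi> k \<in> carrier G0" using assms(4) unfolding hom_def by auto
  obtain S0 where S0: "finite S0" "S0 \<subseteq> carrier P" "generate P S0 = carrier P" using assms(8) by blast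
  obtain s n where sn: "\<forall>i<n. s i \<in> S0" "generate P S0 = Sp P {\<one>\<^bsub>P\<^esub>} s n"
    using P.generate_Sp[OF S0(1,2)] by blast
  have sc: "\<And>i. i < n \<Longrightarrow> s i \<in> carrier P" using sn(1) S0(2) by blast
  have fg: "carrier P = Sp P {\<one>\<^bsub>P\<^esub>} s n" using sn(2) S0(3) by simp
  define C where "C = isol P K (carrier P)"
  have sC: "subgroup C P" unfolding C_def by (rule P.isol_subgroup[OF sK P.subgroup_self])
  have Cc: "C \<subseteq> carrier P" unfolding C_def by (rule P.isol_sub)
  have KC: "K \<subseteq> C" unfolding C_def using P.isol_base[OF Kc, of "carrier P"] Kc by blast
  have CS: "C \<subseteq> Sp P {\<one>\<^bsub>P\<^esub>} s n" using Cc fg by simp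
  obtain c where c0: "(\<forall>i<n. c i \<in> C) \<and> C = Sp P {\<one>\<^bsub>P\<^esub>} c n"
    using P.subgroup_fg[OF sc sC CS] by (rule exE)
  note c = conjunct1[OF c0] conjunct2[OF c0]
  have cc: "\<And>i. i < n \<Longrightarrow> c i \<in> carrier P" using c(1) Cc by blast
  have pw: "\<exists>j::nat. j > 0 \<and> c i [^]\<^bsub>P\<^esub> j \<in> K" if "i < n" for i
  proof -
    have "c i \<in> isol P K (carrier P)" using c(1) that unfolding C_def by simp
    then show ?thesis unfolding isol_def by simp
  qed
  obtain Y where Y0: "finite Y \<and> Y \<subseteq> Sp P {\<one>\<^bsub>P\<^esub>} c n \<and>
    (\<forall>x\<in>Sp P {\<one>\<^bsub>P\<^esub>} c n. \<exists>k\<in>K. \<exists>y\<in>Y. x = k \<otimes>\<^bsub>P\<^esub> y)"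
    using P.coset_finite[OF sK cc pw] by (rule exE)
  note Y = conjunct1[OF Y0] conjunct1[OF conjunct2[OF Y0]] conjunct2[OF conjunct2[OF Y0]]
  define Dset where "Dset = {D. subgroup D P \<and> K \<subseteq> D \<and> D \<subseteq> C}"
  have finD: "finite Dset" unfolding Dset_def
    by (rule P.finite_between[OF sK Cc Y(1)]) (use Y(2,3) c(2) in auto)
  define Q where "Q B D r \<longleftrightarrow> subgroup B P \<and> K \<subseteq> B \<and> B \<inter> C = D \<and>
      (\<exists>f. (\<forall>i<r. f i \<in> B) \<and> B = Sp P D f r \<and> freeS P D f r)" for B D r
  define I where "I = {(D, r). D \<in> Dset \<and> r \<le> n \<and> (\<exists>B. Q B D r)}"
  define F where "F = (\<lambda>(D, r). SOME B. Q B D r) ` I"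
  have "I \<subseteq> Dset \<times> {..n}" unfolding I_def by auto
  then have "finite I" using finD by (meson finite_SigmaI finite_atMost finite_subset)
  then have finF: "finite F" unfolding F_def by simp
  have QF: "Q (SOME B. Q B D r) D r" if "(D, r) \<in> I" for D r
    using that unfolding I_def by (auto intro: someI_ex)
  have memF: "\<forall>B\<in>F. subgroup B P \<and> \<psi> ` carrier A \<subseteq> B"
  proof
    fix B assume "B \<in> F"
    then obtain D r where "(D, r) \<in> I" "B = (SOME B. Q B D r)" unfolding F_def by auto
    then have "Q B D r" using QF by simp
    then show "subgroup B P \<and> \<psi> ` carrier A \<subseteq> B" unfolding Q_def K_def by blast
  qed
  have main: "\<exists>B'\<in>F. amalg_prod G0 (P\<lparr>carrier := B\<rparr>) A \<phi> \<psi> \<cong> amalg_prod G0 (P\<lparr>carrier := B'\<rparr>) A \<phi> \<psi>"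
    if sB: "subgroup B P" and KB: "K \<subseteq> B" for B
  proof -
    interpret B: subgroup B P by (rule sB)
    define D where "D = B \<inter> C"
    have sD: "subgroup D P" unfolding D_def by (rule P.subgroups_Inter_pair[OF sB sC])
    have KD: "K \<subseteq> D" unfolding D_def using KB KC by blast
    have DB: "D \<subseteq> B" unfolding D_def by blast
    have DD: "D \<in> Dset" unfolding Dset_def D_def using sD KD D_def by auto
    have BS: "B \<subseteq> Sp P {\<one>\<^bsub>P\<^esub>} s n" using B.subset fg by simp
    obtain \<eta> where \<eta>0: "(\<forall>i<n. \<eta> i \<in> B) \<and> B = Sp P {\<one>\<^bsub>P\<^esub>} \<eta> n"
      using P.subgroup_fg[OF sc sB BS] by (rule exE)
    note \<eta> = conjunct1[OF \<eta>0] conjunct2[OF \<eta>0]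
    have \<eta>B: "\<eta> i \<in> B" if "i < n" for i using \<eta>0 that by blast
    have pu: "pure P D B"
      unfolding pure_def
    proof (intro ballI allI impI)
      fix x and j::nat assume x: "x \<in> B" "j > 0" "x [^]\<^bsub>P\<^esub> j \<in> D"
      then have "x [^]\<^bsub>P\<^esub> j \<in> C" unfolding D_def by blast
      then obtain k::nat where k: "k > 0" "(x [^]\<^bsub>P\<^esub> j) [^]\<^bsub>P\<^esub> k \<in> K" unfolding C_def isol_def by blast
      have xc: "x \<in> carrier P" using x B.subset by blast
      have "x [^]\<^bsub>P\<^esub> (j * k) \<in> K" using k xc by (simp add: P.nat_pow_pow)
      moreover have "j * k > 0" using x k by simp
      ultimately have "x \<in> C" unfolding C_def isol_def using xc by blast
      then show "x \<in> D" unfolding D_def using x by blast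
    qed
    have rk: "\<forall>x\<in>B. \<exists>j::nat. j > 0 \<and> x [^]\<^bsub>P\<^esub> j \<in> Sp P D \<eta> n"
    proof
      fix x assume x: "x \<in> B"
      have "Sp P {\<one>\<^bsub>P\<^esub>} \<eta> n \<subseteq> Sp P D \<eta> n" using P.Sp_mono subgroup.one_closed[OF sD] by blast
      then have "x \<in> Sp P D \<eta> n" using x \<eta>(2) by blast
      moreover have "x [^]\<^bsub>P\<^esub> (1::nat) = x" using x B.subset by auto
      ultimately show "\<exists>j::nat. j > 0 \<and> x [^]\<^bsub>P\<^esub> j \<in> Sp P D \<eta> n" by (intro exI[of _ 1]) auto
    qed
    have "\<exists>r\<le>n. \<exists>f. (\<forall>i<r. f i \<in> B) \<and> B = Sp P D f r \<and> freeS P D f r"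
      by (rule P.split_free[OF sc fg sD sB DB pu \<eta>B rk])
    then obtain r f where rf: "r \<le> n" "\<forall>i<r. f i \<in> B" "B = Sp P D f r" "freeS P D f r"
      by blast
    have QB: "Q B D r" unfolding Q_def using sB KB D_def rf by blast
    then have DI: "(D, r) \<in> I" unfolding I_def using DD rf(1) by blast
    define B' where "B' = (SOME B. Q B D r)"
    have B'F: "B' \<in> F" unfolding F_def B'_def using DI by force
    have QB': "Q B' D r" unfolding B'_def by (rule QF[OF DI])
    then obtain f' where f': "\<forall>i<r. f' i \<in> B'" "B' = Sp P D f' r" "freeS P D f' r"
      and sB': "subgroup B' P" and KB': "K \<subseteq> B'" unfolding Q_def by blast
    have fc: "\<And>i. i < r \<Longrightarrow> f i \<in> carrier P" using rf(2) B.subset by blast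
    have f'c: "\<And>i. i < r \<Longrightarrow> f' i \<in> carrier P" using f'(1) subgroup.subset[OF sB'] by blast
    obtain h where h: "siso P (Sp P D f r) (Sp P D f' r) h" "\<forall>d\<in>D. h d = d"
      using P.iso_free[OF sD fc f'c rf(4) f'(3)] by blast
    have hB: "siso P B B' h" using h(1) rf(3) f'(2) by simp
    have h1: "h \<one>\<^bsub>P\<^esub> = \<one>\<^bsub>P\<^esub>" using h(2) subgroup.one_closed[OF sD] by blast
    have hk: "\<And>k. k \<in> carrier A \<Longrightarrow> h (\<psi> k) = \<psi> k" using h(2) KD unfolding K_def by blast
    have "amalg_prod G0 (P\<lparr>carrier := B\<rparr>) A \<phi> \<psi> \<cong> amalg_prod G0 (P\<lparr>carrier := B'\<rparr>) A \<phi> \<psi>"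
      by (rule transport_subgroups[OF assms(1,2) \<phi>c sB sB' _ _ hB h1 hk])
        (use KB KB' in \<open>auto simp: K_def\<close>)
    then show ?thesis using B'F by blast
  qed
  show ?thesis
    by (rule exI[of _ F]) (use finF memF main in \<open>auto simp: K_def\<close>)
qed



end
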